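(* In the setting described in the context, let $\beta_t$ ($t\ge 1$) denote the policy computed by LPSM at slot $t$. Then $$\mathbb{E}\Big[\,1+\sum_{t=1}^{\infty}\mathbb{I}\{\beta_t\neq\beta^*\}\Big]\;\le\;1+\frac{(1+A)\,S}{e^{\frac12\left(\frac{\Delta_1}{B_0}\right)^2}-1},$$ i.e. the expected number of slots in which LPSM plays a non-optimal policy (counting slot $0$, where an arbitrary action is played) is at most this quantity.
   Context: Setting (MDP with unknown mean rewards). $\mathcal{S}$ is a finite state space and $\mathcal{A}$ a finite action set, with $S=|\mathcal{S}|$, $A=|\mathcal{A}|$; for each $s\in\mathcal{S}$ a nonempty set $\mathcal{A}_s\subseteq\mathcal{A}$ of allowed actions is given. The transition probabilities $P(s'\mid s,a)$ are known to the agent. The MDP is ergodic: every deterministic stationary policy $\beta:\mathcal{S}\to\mathcal{A}$ with $\beta(s)\in\mathcal{A}_s$ induces an irreducible aperiodic Markov chain; let $\pi_\beta$ be its stationary distribution. Let $X_0,X_1,\dots$ be i.i.d. random variables with support $\mathcal{X}$. If at slot $t$ the state is $s_t$ and action $a_t\in\mathcal{A}_{s_t}$ is taken, the agent receives reward $r_t=f(s_t,a_t,X_t)$, where the function $f$ is known to the agent, the next state $s_{t+1}$ is drawn from $P(\cdot\mid s_t,a_t)$, and after slot $t$ the agent learns the realization $x_t$ of $X_t$. The initial state $s_0$ is arbitrary. Let $\mu(s,a)=\mathbb{E}[f(s,a,X)]$ and let $\mathbf{M}$ be the matrix with entries $\mu(s,a)$. For any matrix $\Theta$ with entries $\Theta(s,a)$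 and policy $\beta$, set $\rho(\beta,\Theta)=\sum_{s\in\mathcal{S}}\pi_\beta(s)\Theta(s,\beta(s))$. Let $\beta^*$ be an optimal deterministic stationary policy, $\rho^*=\rho(\beta^*,\mathbf{M})=\max_\beta\rho(\beta,\mathbf{M})$, and $\Delta_1=\rho^*-\max_{\beta\neq\beta^*}\rho(\beta,\mathbf{M})$. Let $B(s,a)\ge\sup_{x\in\mathcal{X}}f(s,a,x)-\inf_{x\in\mathcal{X}}f(s,a,x)$ and $B_0=\max_{(s,a)}B(s,a)$ (finite). A fraction $c/0$ with $c>0$ is read as $+\infty$. LP$(\Theta)$: maximize $\sum_{s}\sum_{a\in\mathcal{A}_s}\pi(s,a)\Theta(s,a)$ subject to $\pi(s,a)\ge 0$, $\sum_s\sum_{a\in\mathcal{A}_s}\pi(s,a)=1$, and $\sum_{a\in\mathcal{A}_{s'}}\pi(s',a)=\sum_s\sum_{a\in\mathcal{A}_s}\pi(s,a)P(s'\mid s,a)$ for all $s'\in\mathcal{S}$. Algorithm LPSM: at slot $0$ play any allowed action. At each slot $n\ge 1$, let $\Theta_n(s,a)=\frac1n\sum_{k=0}^{n-1}f(s,a,x_k)$ for all allowed pairs $(s,a)$, solve LP$(\Theta_n)$ to obtain a solution $\pi_{(n)}$, define $\beta_n(s)\in\arg\max_{a\in\mathcal{A}_s}\pi_{(n)}(s,a)$ for every $s$, and play $\beta_n(s_n)$. *)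

theory Defs
  imports "HOL-Probability.Probability"
begin

definition valid_policy :: "('s \<Rightarrow> 'a set) \<Rightarrow> ('s \<Rightarrow> 'a) \<Rightarrow> bool" where
  "valid_policy Acts \<beta> \<longleftrightarrow> (\<forall>s. \<beta> s \<in> Acts s)"

definition chain_of :: "('s \<Rightarrow> 'a \<Rightarrow> 's \<Rightarrow> real) \<Rightarrow> ('s \<Rightarrow> 'a) \<Rightarrow> 's \<Rightarrow> 's \<Rightarrow> real" where
  "chain_of P \<beta> s s' = P s (\<beta> s) s'"

fun mpow :: "('s::finite \<Rightarrow> 's \<Rightarrow> real) \<Rightarrow> nat \<Rightarrow> 's \<Rightarrow> 's \<Rightarrow> real" where
  "mpow Q 0 s s' = (if s = s' then 1 else 0)"
| "mpow Q (Suc n) s s' = (\<Sum>u\<in>UNIV. mpow Q n s u * Q u s')"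

definition irreducible_chain :: "('s::finite \<Rightarrow> 's \<Rightarrow> real) \<Rightarrow> bool" where
  "irreducible_chain Q \<longleftrightarrow> (\<forall>s s'. \<exists>n. mpow Q n s s' > 0)"

definition aperiodic_chain :: "('s::finite \<Rightarrow> 's \<Rightarrow> real) \<Rightarrow> bool" where
  "aperiodic_chain Q \<longleftrightarrow> (\<forall>s. Gcd {n. n > 0 \<and> mpow Q n s s > 0} = (1::nat))"

definition is_stationary :: "('s::finite \<Rightarrow> 's \<Rightarrow> real) \<Rightarrow> ('s \<Rightarrow> real) \<Rightarrow> bool" where
  "is_stationary Q p \<longleftrightarrow> (\<forall>s. p s \<ge> 0) \<and> (\<Sum>s\<in>UNIV. p s) = 1 \<and>
     (\<forall>s'. p s' = (\<Sum>s\<in>UNIV. p s * Q s s'))"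

text \<open>The (unique, under irreducibility) stationary distribution pi_beta.\<close>
definition stat_dist :: "('s::finite \<Rightarrow> 'a \<Rightarrow> 's \<Rightarrow> real) \<Rightarrow> ('s \<Rightarrow> 'a) \<Rightarrow> 's \<Rightarrow> real" where
  "stat_dist P \<beta> = (THE p. is_stationary (chain_of P \<beta>) p)"

definition rho :: "('s::finite \<Rightarrow> 'a \<Rightarrow> 's \<Rightarrow> real) \<Rightarrow> ('s \<Rightarrow> 'a) \<Rightarrow> ('s \<Rightarrow> 'a \<Rightarrow> real) \<Rightarrow> real" where
  "rho P \<beta> \<Theta> = (\<Sum>s\<in>UNIV. stat_dist P \<beta> s * \<Theta> s (\<beta> s))"

text \<open>The linear program LP(Theta); variables pi(s,a) for allowed pairs only.\<close>
definition LP_feasible :: "('s::finite \<Rightarrow> 'a::finite set) \<Rightarrow> ('s \<Rightarrow> 'a \<Rightarrow> 's \<Rightarrow> real) \<Rightarrow> ('s \<Rightarrow> 'a \<Rightarrow> real) \<Rightarrow> bool" where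
  "LP_feasible Acts P p \<longleftrightarrow>
     (\<forall>s. \<forall>a\<in>Acts s. p s a \<ge> 0) \<and>
     (\<Sum>s\<in>UNIV. \<Sum>a\<in>Acts s. p s a) = 1 \<and>
     (\<forall>s'. (\<Sum>a\<in>Acts s'. p s' a) = (\<Sum>s\<in>UNIV. \<Sum>a\<in>Acts s. p s a * P s a s'))"

definition LP_obj :: "('s::finite \<Rightarrow> 'a::finite set) \<Rightarrow> ('s \<Rightarrow> 'a \<Rightarrow> real) \<Rightarrow> ('s \<Rightarrow> 'a \<Rightarrow> real) \<Rightarrow> real" where
  "LP_obj Acts p \<Theta> = (\<Sum>s\<in>UNIV. \<Sum>a\<in>Acts s. p s a * \<Theta> s a)"

definition LP_optimal :: "('s::finite \<Rightarrow> 'a::finite set) \<Rightarrow> ('s \<Rightarrow> 'a \<Rightarrow> 's \<Rightarrow> real) \<Rightarrow> ('s \<Rightarrow> 'a \<Rightarrow> real) \<Rightarrow> ('s \<Rightarrow> 'a \<Rightarrow> real) \<Rightarrow> bool" where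
  "LP_optimal Acts P \<Theta> p \<longleftrightarrow> LP_feasible Acts P p \<and>
     (\<forall>q. LP_feasible Acts P q \<longrightarrow> LP_obj Acts q \<Theta> \<le> LP_obj Acts p \<Theta>)"

text \<open>b is a policy LPSM may output for matrix Theta: b(s) is an argmax over allowed a
  of pi(s,a) for some optimal solution pi of LP(Theta).\<close>
definition LPSM_policy :: "('s::finite \<Rightarrow> 'a::finite set) \<Rightarrow> ('s \<Rightarrow> 'a \<Rightarrow> 's \<Rightarrow> real) \<Rightarrow> ('s \<Rightarrow> 'a \<Rightarrow> real) \<Rightarrow> ('s \<Rightarrow> 'a) \<Rightarrow> bool" where
  "LPSM_policy Acts P \<Theta> b \<longleftrightarrow> (\<exists>p. LP_optimal Acts P \<Theta> p \<and>
     (\<forall>s. b s \<in> Acts s \<and> (\<forall>a\<in>Acts s. p s a \<le> p s (b s))))"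

definition Theta_emp :: "('s \<Rightarrow> 'a \<Rightarrow> 'x \<Rightarrow> real) \<Rightarrow> (nat \<Rightarrow> 'w \<Rightarrow> 'x) \<Rightarrow> nat \<Rightarrow> 'w \<Rightarrow> 's \<Rightarrow> 'a \<Rightarrow> real" where
  "Theta_emp f X n \<omega> s a = (\<Sum>k<n. f s a (X k \<omega>)) / real n"

end

theory Submission
  imports Defs
begin


lemma mpow_nonneg: "(\<forall>s s'. Q s s' \<ge> 0) \<Longrightarrow> mpow Q n s s' \<ge> 0"
  by (induction n arbitrary: s') (auto intro!: sum_nonneg)

lemma inv_mpow:
  fixes Q :: "'s::finite \<Rightarrow> 's \<Rightarrow> real"
  assumes "\<forall>s'. v s' = (\<Sum>s\<in>UNIV. v s * Q s s')"
  shows "v s' = (\<Sum>s\<in>UNIV. v s * mpow Q n s s')"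
proof (induction n arbitrary: s')
  case 0
  then show ?case by (simp add: if_distrib cong: if_cong)
next
  case (Suc n)
  have "(\<Sum>s\<in>UNIV. v s * mpow Q (Suc n) s s') = (\<Sum>s\<in>UNIV. \<Sum>u\<in>UNIV. v s * mpow Q n s u * Q u s')"
    by (simp add: sum_distrib_left mult.assoc)
  also have "\<dots> = (\<Sum>u\<in>UNIV. (\<Sum>s\<in>UNIV. v s * mpow Q n s u) * Q u s')"
    by (subst sum.swap) (simp add: sum_distrib_right)
  also have "\<dots> = (\<Sum>u\<in>UNIV. v u * Q u s')"
    by (rule sum.cong[OF refl]) (simp only: Suc.IH[symmetric])
  also have "\<dots> = v s'" by (rule assms[rule_format, symmetric])
  finally show ?case by simp
qed

lemma inv_pos:
  fixes Q :: "'s::finite \<Rightarrow> 's \<Rightarrow> real"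
  assumes nn: "\<forall>s s'. Q s s' \<ge> 0" and irr: "irreducible_chain Q"
    and inv: "\<forall>s'. u s' = (\<Sum>s\<in>UNIV. u s * Q s s')"
    and u0: "\<forall>s. u s \<ge> 0" and pos: "u s0 > 0"
  shows "u s' > 0"
proof -
  obtain n where n: "mpow Q n s0 s' > 0" using irr unfolding irreducible_chain_def by blast
  have "u s0 * mpow Q n s0 s' \<le> (\<Sum>s\<in>UNIV. u s * mpow Q n s s')"
    by (rule member_le_sum) (auto intro!: mult_nonneg_nonneg u0[rule_format] mpow_nonneg nn)
  also have "\<dots> = u s'" by (rule inv_mpow[OF inv, symmetric])
  finally show ?thesis using n pos by (smt (verit) mult_pos_pos)
qed

lemma abs_inv:
  fixes Q :: "'s::finite \<Rightarrow> 's \<Rightarrow> real"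
  assumes nn: "\<forall>s s'. Q s s' \<ge> 0" and rs: "\<forall>s. (\<Sum>s'\<in>UNIV. Q s s') = 1"
    and inv: "\<forall>s'. v s' = (\<Sum>s\<in>UNIV. v s * Q s s')"
  shows "\<forall>s'. \<bar>v s'\<bar> = (\<Sum>s\<in>UNIV. \<bar>v s\<bar> * Q s s')"
proof -
  have le: "\<bar>v j\<bar> \<le> (\<Sum>i\<in>UNIV. \<bar>v i\<bar> * Q i j)" for j
  proof -
    have "\<bar>v j\<bar> = \<bar>\<Sum>i\<in>UNIV. v i * Q i j\<bar>" by (subst inv[rule_format, of j]) (rule refl)
    also have "\<dots> \<le> (\<Sum>i\<in>UNIV. \<bar>v i * Q i j\<bar>)" by (rule sum_abs)
    also have "\<dots> = (\<Sum>i\<in>UNIV. \<bar>v i\<bar> * Q i j)" using nn by (simp add: abs_mult)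
    finally show ?thesis .
  qed
  have "(\<Sum>j\<in>UNIV. \<Sum>i\<in>UNIV. \<bar>v i\<bar> * Q i j) = (\<Sum>i\<in>UNIV. \<bar>v i\<bar>)"
    by (subst sum.swap) (simp add: sum_distrib_left[symmetric] rs)
  then have "(\<Sum>j\<in>UNIV. (\<Sum>i\<in>UNIV. \<bar>v i\<bar> * Q i j) - \<bar>v j\<bar>) = 0"
    by (simp add: sum_subtractf)
  then have "\<forall>j\<in>UNIV. (\<Sum>i\<in>UNIV. \<bar>v i\<bar> * Q i j) - \<bar>v j\<bar> = 0"
    by (subst sum_nonneg_eq_0_iff[symmetric]) (auto simp: le)
  then show ?thesis by auto
qed

lemma inv_sum0:
  fixes Q :: "'s::finite \<Rightarrow> 's \<Rightarrow> real"
  assumes nn: "\<forall>s s'. Q s s' \<ge> 0" and rs: "\<forall>s. (\<Sum>s'\<in>UNIV. Q s s') = 1"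
    and irr: "irreducible_chain Q"
    and inv: "\<forall>s'. v s' = (\<Sum>s\<in>UNIV. v s * Q s s')" and s0: "(\<Sum>s\<in>UNIV. v s) = 0"
  shows "v s = 0"
proof -
  define u where "u s = (\<bar>v s\<bar> + v s) / 2" for s
  have ainv: "\<forall>s'. \<bar>v s'\<bar> = (\<Sum>s\<in>UNIV. \<bar>v s\<bar> * Q s s')" by (rule abs_inv[OF nn rs inv])
  have uinv: "\<forall>s'. u s' = (\<Sum>s\<in>UNIV. u s * Q s s')"
  proof
    fix s'
    have "(\<Sum>s\<in>UNIV. u s * Q s s') = ((\<Sum>s\<in>UNIV. \<bar>v s\<bar> * Q s s') + (\<Sum>s\<in>UNIV. v s * Q s s'))/2"
      by (simp add: u_def sum_divide_distrib[symmetric] sum.distrib algebra_simps)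
    then have F: "(\<Sum>s\<in>UNIV. u s * Q s s') = ((\<Sum>s\<in>UNIV. \<bar>v s\<bar> * Q s s') + (\<Sum>s\<in>UNIV. v s * Q s s'))/2" .
    have "u s' = (\<bar>v s'\<bar> + v s') / 2" by (rule u_def)
    also have "\<dots> = ((\<Sum>s\<in>UNIV. \<bar>v s\<bar> * Q s s') + (\<Sum>s\<in>UNIV. v s * Q s s'))/2"
      by (simp only: ainv[rule_format, of s', symmetric] inv[rule_format, of s', symmetric])
    also have "\<dots> = (\<Sum>s\<in>UNIV. u s * Q s s')" by (rule F[symmetric])
    finally show "u s' = (\<Sum>s\<in>UNIV. u s * Q s s')" .
  qed
  have u0: "\<forall>s. u s \<ge> 0" by (auto simp: u_def)
  show ?thesis
  proof (cases "\<exists>s0. u s0 > 0")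
    case True
    then obtain s0 where "u s0 > 0" by blast
    then have "\<forall>s. u s > 0" using inv_pos[OF nn irr uinv u0] by blast
    then have "\<forall>s. v s > 0" by (auto simp: u_def abs_if split: if_splits)
    then have "(\<Sum>s\<in>UNIV. v s) > 0" by (intro sum_pos) auto
    then show ?thesis using s0 by simp
  next
    case False
    have "\<forall>s. v s \<le> 0"
    proof
      fix s
      have "\<not> 0 < u s" using False by blast
      then show "v s \<le> 0" unfolding u_def by (auto simp: abs_if split: if_splits)
    qed
    then have "\<forall>s\<in>UNIV. - v s = 0"
      using s0 by (subst sum_nonneg_eq_0_iff[symmetric]) (auto simp: sum_negf)
    then show ?thesis by auto
  qed
qed

lemma stat_unique:
  fixes Q :: "'s::finite \<Rightarrow> 's \<Rightarrow> real"
  assumes nn: "\<forall>s s'. Q s s' \<ge> 0" and rs: "\<forall>s. (\<Sum>s'\<in>UNIV. Q s s') = 1"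
    and irr: "irreducible_chain Q"
    and p: "is_stationary Q p" and q: "is_stationary Q q"
  shows "p = q"
proof
  fix s
  have "(\<lambda>s. p s - q s) s = 0"
  proof (rule inv_sum0[OF nn rs irr])
    show "\<forall>s'. p s' - q s' = (\<Sum>s\<in>UNIV. (p s - q s) * Q s s')"
    proof
      fix s'
      have p': "p s' = (\<Sum>s\<in>UNIV. p s * Q s s')" using p unfolding is_stationary_def by blast
      have q': "q s' = (\<Sum>s\<in>UNIV. q s * Q s s')" using q unfolding is_stationary_def by blast
      have e: "(\<Sum>s\<in>UNIV. (p s - q s) * Q s s') = (\<Sum>s\<in>UNIV. p s * Q s s') - (\<Sum>s\<in>UNIV. q s * Q s s')"
        by (simp add: left_diff_distrib sum_subtractf)
      show "p s' - q s' = (\<Sum>s\<in>UNIV. (p s - q s) * Q s s')" using p' q' e by linarith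
    qed
    have p1: "sum p UNIV = 1" using p unfolding is_stationary_def by blast
    have q1: "sum q UNIV = 1" using q unfolding is_stationary_def by blast
    show "(\<Sum>s\<in>UNIV. p s - q s) = 0"
      using p1 q1 by (simp add: sum_subtractf)
  qed
  then show "p s = q s" by simp
qed

lemma stat_exists:
  fixes Q :: "'s::finite \<Rightarrow> 's \<Rightarrow> real"
  assumes nn: "\<forall>s s'. Q s s' \<ge> 0" and rs: "\<forall>s. (\<Sum>s'\<in>UNIV. Q s s') = 1"
  shows "\<exists>p. is_stationary Q p"
proof -
  define L :: "real^'s \<Rightarrow> real^'s" where "L v = (\<chi> j. v$j - (\<Sum>i\<in>UNIV. v$i * Q i j))" for v
  have lin: "linear L"
    by (rule linearI) (simp_all add: L_def vec_eq_iff sum.distrib sum_distrib_left algebra_simps sum_subtractf)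
  have sumL: "(\<Sum>j\<in>UNIV. L v $ j) = 0" for v
  proof -
    have "(\<Sum>j\<in>UNIV. \<Sum>i\<in>UNIV. v$i * Q i j) = (\<Sum>i\<in>UNIV. v$i)"
      by (subst sum.swap) (simp add: sum_distrib_left[symmetric] rs)
    then show ?thesis by (simp add: L_def sum_subtractf)
  qed
  have "\<not> surj L"
  proof
    assume "surj L"
    then obtain v where "L v = (\<chi> j. 1)" by (metis surjD)
    then have "(\<Sum>j\<in>UNIV. L v $ j) = real CARD('s)" by simp
    with sumL show False by simp
  qed
  then have "\<not> inj L" using linear_injective_imp_surjective[OF lin] by blast
  then obtain x where x: "L x = 0" "x \<noteq> 0" using linear_injective_0[OF lin] by blast
  define v where "v s = x $ s" for s
  have inv: "\<forall>s'. v s' = (\<Sum>s\<in>UNIV. v s * Q s s')"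
  proof
    fix s'
    have "L x $ s' = 0" using x(1) by simp
    then show "v s' = (\<Sum>s\<in>UNIV. v s * Q s s')" unfolding L_def v_def by simp
  qed
  have "\<exists>s1. v s1 \<noteq> 0"
  proof (rule ccontr)
    assume "\<not> (\<exists>s1. v s1 \<noteq> 0)"
    then have "x = 0" by (simp add: vec_eq_iff v_def)
    with x(2) show False by simp
  qed
  then obtain s1 where "v s1 \<noteq> 0" by blast
  define w where "w s = \<bar>v s\<bar>" for s
  have winv: "\<forall>s'. w s' = (\<Sum>s\<in>UNIV. w s * Q s s')" unfolding w_def by (rule abs_inv[OF nn rs inv])
  have wpos: "(\<Sum>s\<in>UNIV. w s) > 0"
  proof -
    have "w s1 \<le> (\<Sum>s\<in>UNIV. w s)" by (rule member_le_sum) (auto simp: w_def)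
    then show ?thesis using \<open>v s1 \<noteq> 0\<close> by (simp add: w_def)
  qed
  define p where "p s = w s / (\<Sum>s\<in>UNIV. w s)" for s
  have "is_stationary Q p"
    unfolding is_stationary_def
  proof (intro conjI allI)
    show "0 \<le> p s" for s using wpos by (simp add: p_def w_def)
    show "(\<Sum>s\<in>UNIV. p s) = 1" using wpos by (simp add: p_def sum_divide_distrib[symmetric])
    show "p s' = (\<Sum>s\<in>UNIV. p s * Q s s')" for s'
    proof -
      have "(\<Sum>s\<in>UNIV. p s * Q s s') = (\<Sum>s\<in>UNIV. w s * Q s s') / (\<Sum>s\<in>UNIV. w s)"
        by (simp add: p_def sum_divide_distrib[symmetric])
      also have "\<dots> = p s'" using winv[rule_format, of s'] by (simp add: p_def)
      finally show ?thesis by simp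
    qed
  qed
  then show ?thesis by blast
qed

lemma harmonic_const:
  fixes Q :: "'s::finite \<Rightarrow> 's \<Rightarrow> real"
  assumes nn: "\<forall>s s'. Q s s' \<ge> 0" and rs: "\<forall>s. (\<Sum>s'\<in>UNIV. Q s s') = 1"
    and irr: "irreducible_chain Q"
    and h: "\<forall>s. h s = (\<Sum>s'\<in>UNIV. Q s s' * h s')"
  shows "h s = h t"
proof -
  define m where "m = Max (range h)"
  have hm: "h s \<le> m" for s unfolding m_def by (rule Max_ge) auto
  obtain s0 where s0: "h s0 = m"
  proof -
    have "m \<in> range h" unfolding m_def by (rule Max_in) auto
    then show ?thesis using that by blast
  qed
  have step: "h s' = m" if "h u = m" "Q u s' > 0" for u s'
  proof -
    have "(\<Sum>x\<in>UNIV. Q u x * (m - h x)) = m * (\<Sum>x\<in>UNIV. Q u x) - (\<Sum>x\<in>UNIV. Q u x * h x)"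
      by (simp add: right_diff_distrib sum_subtractf sum_distrib_left mult.commute)
    also have "\<dots> = m - h u" using rs h[rule_format, of u] by simp
    finally have "(\<Sum>x\<in>UNIV. Q u x * (m - h x)) = m - h u" .
    then have "(\<Sum>x\<in>UNIV. Q u x * (m - h x)) = 0" using that by simp
    then have "\<forall>x\<in>UNIV. Q u x * (m - h x) = 0"
      by (subst sum_nonneg_eq_0_iff[symmetric]) (auto intro!: mult_nonneg_nonneg nn[rule_format] simp: hm)
    then have "Q u s' * (m - h s') = 0" by blast
    then show ?thesis using that(2) by simp
  qed
  have reach: "mpow Q n s0 s' > 0 \<Longrightarrow> h s' = m" for n s'
  proof (induction n arbitrary: s')
    case 0
    then show ?case using s0 by (auto split: if_splits)
  next
    case (Suc n)
    then have "(\<Sum>u\<in>UNIV. mpow Q n s0 u * Q u s') > 0" by simp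
    have "\<exists>u. mpow Q n s0 u * Q u s' > 0"
    proof (rule ccontr)
      assume "\<not> (\<exists>u. mpow Q n s0 u * Q u s' > 0)"
      then have "\<forall>u. mpow Q n s0 u * Q u s' \<le> 0" by (simp add: not_less)
      then have "(\<Sum>u\<in>UNIV. mpow Q n s0 u * Q u s') \<le> 0" by (intro sum_nonpos) auto
      with \<open>(\<Sum>u\<in>UNIV. mpow Q n s0 u * Q u s') > 0\<close> show False by simp
    qed
    then obtain u where pu: "mpow Q n s0 u * Q u s' > 0" by blast
    have n1: "mpow Q n s0 u \<ge> 0" by (rule mpow_nonneg[OF nn])
    have n2: "Q u s' \<ge> 0" using nn by blast
    have "mpow Q n s0 u > 0" "Q u s' > 0"
      using pu n1 n2 by (auto simp: zero_less_mult_iff)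
    then show ?case using Suc.IH step by blast
  qed
  have "\<forall>x. h x = m" using irr reach unfolding irreducible_chain_def by blast
  then show ?thesis by simp
qed

lemma pi_harm0:
  fixes Q :: "'s::finite \<Rightarrow> 's \<Rightarrow> real"
  assumes pi: "is_stationary Q \<pi>"
  shows "(\<Sum>s\<in>UNIV. \<pi> s * (h s - (\<Sum>s'\<in>UNIV. Q s s' * h s'))) = 0"
proof -
  have "(\<Sum>s\<in>UNIV. \<pi> s * (\<Sum>s'\<in>UNIV. Q s s' * h s')) = (\<Sum>s'\<in>UNIV. (\<Sum>s\<in>UNIV. \<pi> s * Q s s') * h s')"
    by (simp add: sum_distrib_left sum_distrib_right mult.assoc) (rule sum.swap)
  also have "\<dots> = (\<Sum>s'\<in>UNIV. \<pi> s' * h s')"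
  proof (rule sum.cong[OF refl])
    fix s'
    have e: "\<pi> s' = (\<Sum>s\<in>UNIV. \<pi> s * Q s s')" using pi unfolding is_stationary_def by blast
    show "(\<Sum>s\<in>UNIV. \<pi> s * Q s s') * h s' = \<pi> s' * h s'" by (simp only: e[symmetric])
  qed
  finally show ?thesis by (simp add: right_diff_distrib sum_subtractf)
qed

lemma poisson:
  fixes Q :: "'s::finite \<Rightarrow> 's \<Rightarrow> real"
  assumes nn: "\<forall>s s'. Q s s' \<ge> 0" and rs: "\<forall>s. (\<Sum>s'\<in>UNIV. Q s s') = 1"
    and irr: "irreducible_chain Q" and pi: "is_stationary Q \<pi>"
  shows "\<exists>h. \<forall>s. (\<Sum>s'\<in>UNIV. \<pi> s' * r s') + h s = r s + (\<Sum>s'\<in>UNIV. Q s s' * h s')"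
proof -
  define g where "g = (\<Sum>s'\<in>UNIV. \<pi> s' * r s')"
  have pisum: "(\<Sum>s\<in>UNIV. \<pi> s) = 1" using pi unfolding is_stationary_def by blast
  define T :: "real^'s \<Rightarrow> real^'s" where
    "T x = (\<chi> s. x$s - (\<Sum>s'\<in>UNIV. Q s s' * x$s') + (\<Sum>s'\<in>UNIV. \<pi> s' * x$s'))" for x
  have lin: "linear T"
    by (rule linearI) (simp_all add: T_def vec_eq_iff sum.distrib sum_distrib_left algebra_simps sum_subtractf)
  have key: "(\<Sum>s\<in>UNIV. \<pi> s * T x $ s) = (\<Sum>s'\<in>UNIV. \<pi> s' * x$s')" for x
  proof -
    have "(\<Sum>s\<in>UNIV. \<pi> s * T x $ s) = (\<Sum>s\<in>UNIV. \<pi> s * (x$s - (\<Sum>s'\<in>UNIV. Q s s' * x$s')))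
        + (\<Sum>s\<in>UNIV. \<pi> s) * (\<Sum>s'\<in>UNIV. \<pi> s' * x$s')"
      by (simp add: T_def distrib_left sum.distrib sum_distrib_right)
    also have "\<dots> = (\<Sum>s'\<in>UNIV. \<pi> s' * x$s')"
      using pi_harm0[OF pi, of "\<lambda>s. x$s"] pisum by simp
    finally show ?thesis .
  qed
  have "inj T"
    unfolding linear_injective_0[OF lin]
  proof (intro allI impI)
    fix x assume T0: "T x = 0"
    have c0: "(\<Sum>s'\<in>UNIV. \<pi> s' * x$s') = 0" using key[of x] T0 by simp
    have harm: "\<forall>s. x$s = (\<Sum>s'\<in>UNIV. Q s s' * x$s')"
    proof
      fix s
      have "T x $ s = 0" using T0 by simp
      then have "x$s - (\<Sum>s'\<in>UNIV. Q s s' * x$s') + (\<Sum>s'\<in>UNIV. \<pi> s' * x$s') = 0"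
        by (simp add: T_def)
      then show "x$s = (\<Sum>s'\<in>UNIV. Q s s' * x$s')" using c0 by linarith
    qed
    obtain s0 :: 's where True by blast
    have const: "x$s = x$s0" for s using harmonic_const[OF nn rs irr harm] .
    have "(\<Sum>s'\<in>UNIV. \<pi> s' * x$s') = (\<Sum>s'\<in>UNIV. \<pi> s' * x$s0)"
      by (rule sum.cong) (use const in auto)
    also have "\<dots> = x$s0" using pisum by (simp add: sum_distrib_right[symmetric])
    finally have "(\<Sum>s'\<in>UNIV. \<pi> s' * x$s') = x$s0" .
    then have "x$s = 0" for s using c0 const[of s] by simp
    then show "x = 0" by (simp add: vec_eq_iff)
  qed
  then have "surj T" using linear_injective_imp_surjective[OF lin] by blast
  then obtain x where x: "T x = (\<chi> s. r s - g)" by (metis surjD)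
  have "(\<Sum>s\<in>UNIV. \<pi> s * (r s - g)) = 0" using pisum
    by (simp add: g_def right_diff_distrib sum_subtractf sum_distrib_right[symmetric])
  then have c0: "(\<Sum>s'\<in>UNIV. \<pi> s' * x$s') = 0" using key[of x] x by simp
  have "\<forall>s. g + x$s = r s + (\<Sum>s'\<in>UNIV. Q s s' * x$s')"
  proof
    fix s
    have "T x $ s = r s - g" using x by simp
    then have "x$s - (\<Sum>s'\<in>UNIV. Q s s' * x$s') + (\<Sum>s'\<in>UNIV. \<pi> s' * x$s') = r s - g"
      by (simp add: T_def)
    then show "g + x$s = r s + (\<Sum>s'\<in>UNIV. Q s s' * x$s')" using c0 by linarith
  qed
  then show ?thesis unfolding g_def by blast
qed



lemma sum_single_pt:
  fixes f :: "'a \<Rightarrow> real"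
  assumes "finite A" "x \<in> A" "\<forall>a\<in>A. a \<noteq> x \<longrightarrow> f a = 0"
  shows "sum f A = f x"
proof -
  have "sum f A = f x + sum f (A - {x})" using assms by (simp add: sum.remove)
  also have "sum f (A - {x}) = 0" using assms by (intro sum.neutral) auto
  finally show ?thesis by simp
qed

context
  fixes Acts :: "'s::finite \<Rightarrow> 'a::finite set" and P :: "'s \<Rightarrow> 'a \<Rightarrow> 's \<Rightarrow> real"
  assumes P_nonneg: "\<forall>s a s'. P s a s' \<ge> 0"
    and P_sum: "\<forall>s. \<forall>a\<in>Acts s. (\<Sum>s'\<in>UNIV. P s a s') = 1"
    and irr: "\<forall>\<beta>. valid_policy Acts \<beta> \<longrightarrow> irreducible_chain (chain_of P \<beta>)"
begin

lemma chain_nn: "\<forall>s s'. chain_of P \<beta> s s' \<ge> 0"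
  using P_nonneg by (simp add: chain_of_def)

lemma chain_rs: "valid_policy Acts \<beta> \<Longrightarrow> \<forall>s. (\<Sum>s'\<in>UNIV. chain_of P \<beta> s s') = 1"
  using P_sum by (simp add: chain_of_def valid_policy_def)

lemma stat_dist_stat:
  assumes "valid_policy Acts \<beta>"
  shows "is_stationary (chain_of P \<beta>) (stat_dist P \<beta>)"
proof -
  have "\<exists>!p. is_stationary (chain_of P \<beta>) p"
    using stat_exists[OF chain_nn chain_rs[OF assms]]
      stat_unique[OF chain_nn chain_rs[OF assms] irr[rule_format, OF assms]] by blast
  then show ?thesis unfolding stat_dist_def by (rule theI')
qed

lemma stat_dist_pos:
  assumes "valid_policy Acts \<beta>"
  shows "stat_dist P \<beta> s > 0"
proof -
  have st: "is_stationary (chain_of P \<beta>) (stat_dist P \<beta>)" by (rule stat_dist_stat[OF assms])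
  then have sum1: "(\<Sum>s\<in>UNIV. stat_dist P \<beta> s) = 1" unfolding is_stationary_def by blast
  have "\<exists>s0. stat_dist P \<beta> s0 > 0"
  proof (rule ccontr)
    assume "\<not> (\<exists>s0. stat_dist P \<beta> s0 > 0)"
    then have "\<forall>s. stat_dist P \<beta> s \<le> 0" by (simp add: not_less)
    then have "(\<Sum>s\<in>UNIV. stat_dist P \<beta> s) \<le> 0" by (intro sum_nonpos) auto
    with sum1 show False by simp
  qed
  then obtain s0 where "stat_dist P \<beta> s0 > 0" by blast
  then show ?thesis
    using inv_pos[OF chain_nn irr[rule_format, OF assms], of "stat_dist P \<beta>" s0] st
    unfolding is_stationary_def by blast
qed

lemma LP_unique:
  fixes \<Theta> :: "'s \<Rightarrow> 'a \<Rightarrow> real"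
  assumes bs: "valid_policy Acts bs"
    and strict: "\<forall>\<beta>. valid_policy Acts \<beta> \<and> \<beta> \<noteq> bs \<longrightarrow> rho P \<beta> \<Theta> < rho P bs \<Theta>"
    and b: "LPSM_policy Acts P \<Theta> b"
  shows "b = bs"
proof -
  define \<pi> where "\<pi> = stat_dist P bs"
  define Q where "Q = chain_of P bs"
  define g where "g = rho P bs \<Theta>"
  have stat: "is_stationary Q \<pi>" unfolding \<pi>_def Q_def by (rule stat_dist_stat[OF bs])
  have g_eq: "g = (\<Sum>s'\<in>UNIV. \<pi> s' * \<Theta> s' (bs s'))" by (simp add: g_def rho_def \<pi>_def)
  obtain h where h: "\<forall>s. g + h s = \<Theta> s (bs s) + (\<Sum>s'\<in>UNIV. Q s s' * h s')"
    using poisson[OF chain_nn chain_rs[OF bs] irr[rule_format, OF bs] stat[unfolded Q_def],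
        of "\<lambda>s. \<Theta> s (bs s)"] unfolding Q_def g_eq by blast
  define Adv where "Adv s a = \<Theta> s a + (\<Sum>s'\<in>UNIV. P s a s' * h s') - g - h s" for s a
  have Adv0: "Adv s (bs s) = 0" for s
    using h[rule_format, of s] unfolding Adv_def Q_def chain_of_def by linarith
  have ident: "rho P \<beta> \<Theta> - g = (\<Sum>s\<in>UNIV. stat_dist P \<beta> s * Adv s (\<beta> s))"
    if vb: "valid_policy Acts \<beta>" for \<beta>
  proof -
    have st: "is_stationary (chain_of P \<beta>) (stat_dist P \<beta>)" by (rule stat_dist_stat[OF vb])
    then have s1: "(\<Sum>s\<in>UNIV. stat_dist P \<beta> s) = 1" unfolding is_stationary_def by blast
    have z: "(\<Sum>s\<in>UNIV. stat_dist P \<beta> s * (h s - (\<Sum>s'\<in>UNIV. chain_of P \<beta> s s' * h s'))) = 0"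
      by (rule pi_harm0[OF st])
    have "(\<Sum>s\<in>UNIV. stat_dist P \<beta> s * Adv s (\<beta> s)) =
        (\<Sum>s\<in>UNIV. stat_dist P \<beta> s * \<Theta> s (\<beta> s))
       - (\<Sum>s\<in>UNIV. stat_dist P \<beta> s * (h s - (\<Sum>s'\<in>UNIV. chain_of P \<beta> s s' * h s')))
       - (\<Sum>s\<in>UNIV. stat_dist P \<beta> s) * g"
      by (simp add: Adv_def chain_of_def algebra_simps sum_subtractf sum.distrib sum_distrib_right sum_distrib_left)
    then show ?thesis using z s1 by (simp add: rho_def)
  qed
  have Adv_neg: "Adv s a < 0" if a: "a \<in> Acts s" "a \<noteq> bs s" for s a
  proof -
    define \<beta> where "\<beta> = bs(s := a)"
    have vb: "valid_policy Acts \<beta>" using bs a by (auto simp: valid_policy_def \<beta>_def)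
    have ne: "\<beta> \<noteq> bs" using a by (auto simp: \<beta>_def fun_eq_iff)
    have "rho P \<beta> \<Theta> - g = (\<Sum>s'\<in>UNIV. stat_dist P \<beta> s' * Adv s' (\<beta> s'))" by (rule ident[OF vb])
    also have "\<dots> = stat_dist P \<beta> s * Adv s (\<beta> s)"
      by (rule sum_single_pt) (auto simp: \<beta>_def Adv0)
    finally have eq: "rho P \<beta> \<Theta> - g = stat_dist P \<beta> s * Adv s a" by (simp add: \<beta>_def)
    have "rho P \<beta> \<Theta> < g" using strict vb ne unfolding g_def by blast
    then have "stat_dist P \<beta> s * Adv s a < 0" using eq by linarith
    moreover have "stat_dist P \<beta> s > 0" by (rule stat_dist_pos[OF vb])
    ultimately show ?thesis by (simp add: mult_less_0_iff)
  qed
  obtain p where opt: "LP_optimal Acts P \<Theta> p"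
    and bp: "\<forall>s. b s \<in> Acts s \<and> (\<forall>a\<in>Acts s. p s a \<le> p s (b s))"
    using b unfolding LPSM_policy_def by blast
  have feas: "LP_feasible Acts P p" using opt unfolding LP_optimal_def by blast
  have pnn: "\<forall>s. \<forall>a\<in>Acts s. p s a \<ge> 0" and p1: "(\<Sum>s\<in>UNIV. \<Sum>a\<in>Acts s. p s a) = 1"
    and flow: "\<forall>s'. (\<Sum>a\<in>Acts s'. p s' a) = (\<Sum>s\<in>UNIV. \<Sum>a\<in>Acts s. p s a * P s a s')"
    using feas unfolding LP_feasible_def by blast+
  have obj_ident: "LP_obj Acts q \<Theta> - g = (\<Sum>s\<in>UNIV. \<Sum>a\<in>Acts s. q s a * Adv s a)"
    if "LP_feasible Acts P q" for q
  proof -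
    have q1: "(\<Sum>s\<in>UNIV. \<Sum>a\<in>Acts s. q s a) = 1"
      and qflow: "\<forall>s'. (\<Sum>a\<in>Acts s'. q s' a) = (\<Sum>s\<in>UNIV. \<Sum>a\<in>Acts s. q s a * P s a s')"
      using that unfolding LP_feasible_def by blast+
    have A: "(\<Sum>s\<in>UNIV. \<Sum>a\<in>Acts s. q s a * (\<Sum>s'\<in>UNIV. P s a s' * h s'))
        = (\<Sum>s'\<in>UNIV. (\<Sum>a\<in>Acts s'. q s' a) * h s')"
    proof -
      have "(\<Sum>s\<in>UNIV. \<Sum>a\<in>Acts s. q s a * (\<Sum>s'\<in>UNIV. P s a s' * h s'))
          = (\<Sum>s\<in>UNIV. \<Sum>a\<in>Acts s. \<Sum>s'\<in>UNIV. q s a * P s a s' * h s')"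
        by (simp add: sum_distrib_left mult.assoc)
      also have "\<dots> = (\<Sum>s\<in>UNIV. \<Sum>s'\<in>UNIV. \<Sum>a\<in>Acts s. q s a * P s a s' * h s')"
        by (intro sum.cong refl sum.swap)
      also have "\<dots> = (\<Sum>s'\<in>UNIV. \<Sum>s\<in>UNIV. \<Sum>a\<in>Acts s. q s a * P s a s' * h s')"
        by (rule sum.swap)
      also have "\<dots> = (\<Sum>s'\<in>UNIV. (\<Sum>s\<in>UNIV. \<Sum>a\<in>Acts s. q s a * P s a s') * h s')"
        by (simp add: sum_distrib_right)
      also have "\<dots> = (\<Sum>s'\<in>UNIV. (\<Sum>a\<in>Acts s'. q s' a) * h s')"
        using qflow by simp
      finally show ?thesis .
    qed
    have "(\<Sum>s\<in>UNIV. \<Sum>a\<in>Acts s. q s a * Adv s a) =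
       LP_obj Acts q \<Theta> + (\<Sum>s\<in>UNIV. \<Sum>a\<in>Acts s. q s a * (\<Sum>s'\<in>UNIV. P s a s' * h s'))
       - (\<Sum>s\<in>UNIV. \<Sum>a\<in>Acts s. q s a) * g - (\<Sum>s\<in>UNIV. (\<Sum>a\<in>Acts s. q s a) * h s)"
      by (simp add: Adv_def LP_obj_def algebra_simps sum_subtractf sum.distrib sum_distrib_right sum_distrib_left)
    then show ?thesis using A q1 by simp
  qed
  define ps where "ps s a = (if a = bs s then \<pi> s else 0)" for s a
  have sum_ps: "(\<Sum>a\<in>Acts s. ps s a * F a) = \<pi> s * F (bs s)" for s and F :: "'a \<Rightarrow> real"
    using bs by (subst sum_single_pt[where x="bs s"]) (auto simp: ps_def valid_policy_def)
  have sum_ps1: "(\<Sum>a\<in>Acts s. ps s a) = \<pi> s" for s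
    using sum_ps[of s "\<lambda>_. 1"] by simp
  have sum_psP: "(\<Sum>a\<in>Acts s. ps s a * P s a s') = \<pi> s * P s (bs s) s'" for s s'
    by (rule sum_ps)
  have pi1: "(\<Sum>s\<in>UNIV. \<pi> s) = 1" and pinn: "\<forall>s. \<pi> s \<ge> 0"
    and piinv: "\<forall>s'. \<pi> s' = (\<Sum>s\<in>UNIV. \<pi> s * Q s s')"
    using stat unfolding is_stationary_def by blast+
  have ps_feas: "LP_feasible Acts P ps"
    unfolding LP_feasible_def
  proof (intro conjI allI ballI)
    show "0 \<le> ps s a" for s a using pinn unfolding ps_def by simp
    show "(\<Sum>s\<in>UNIV. \<Sum>a\<in>Acts s. ps s a) = 1" using pi1 by (simp only: sum_ps1)
    fix s'
    have "(\<Sum>s\<in>UNIV. \<Sum>a\<in>Acts s. ps s a * P s a s') = (\<Sum>s\<in>UNIV. \<pi> s * Q s s')"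
      by (intro sum.cong refl) (simp only: sum_psP Q_def chain_of_def)
    also have "\<dots> = \<pi> s'" by (rule piinv[rule_format, symmetric])
    finally show "(\<Sum>a\<in>Acts s'. ps s' a) = (\<Sum>s\<in>UNIV. \<Sum>a\<in>Acts s. ps s a * P s a s')"
      by (simp only: sum_ps1)
  qed
  have "LP_obj Acts ps \<Theta> = (\<Sum>s\<in>UNIV. \<pi> s * \<Theta> s (bs s))"
    unfolding LP_obj_def by (intro sum.cong refl) (rule sum_ps)
  then have "LP_obj Acts ps \<Theta> = g" using g_eq by simp
  moreover have "LP_obj Acts ps \<Theta> \<le> LP_obj Acts p \<Theta>"
    using opt ps_feas unfolding LP_optimal_def by blast
  ultimately have "g \<le> LP_obj Acts p \<Theta>" by simp
  then have nonneg: "(\<Sum>s\<in>UNIV. \<Sum>a\<in>Acts s. p s a * Adv s a) \<ge> 0" using obj_ident[OF feas] by simp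
  have tnp: "p s a * Adv s a \<le> 0" if "a \<in> Acts s" for s a
  proof (cases "a = bs s")
    case True then show ?thesis by (simp add: Adv0)
  next
    case False then show ?thesis using Adv_neg[OF that False] pnn that
      by (simp add: mult_nonneg_nonpos)
  qed
  have inner_nn: "(\<Sum>a\<in>Acts s. - (p s a * Adv s a)) \<ge> 0" for s
    by (rule sum_nonneg) (simp add: tnp)
  have "(\<Sum>s\<in>UNIV. \<Sum>a\<in>Acts s. - (p s a * Adv s a)) \<le> 0"
    using nonneg by (simp only: sum_negf)
  then have "(\<Sum>s\<in>UNIV. \<Sum>a\<in>Acts s. - (p s a * Adv s a)) = 0"
    using sum_nonneg[of UNIV "\<lambda>s. \<Sum>a\<in>Acts s. - (p s a * Adv s a)", OF inner_nn] by linarith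
  then have "\<forall>s\<in>UNIV. (\<Sum>a\<in>Acts s. - (p s a * Adv s a)) = 0"
    using sum_nonneg_eq_0_iff[of UNIV "\<lambda>s. \<Sum>a\<in>Acts s. - (p s a * Adv s a)"] inner_nn by simp
  then have "\<forall>a\<in>Acts s. - (p s a * Adv s a) = 0" for s
    using sum_nonneg_eq_0_iff[of "Acts s" "\<lambda>a. - (p s a * Adv s a)"] tnp by simp
  then have pzero: "p s a = 0" if "a \<in> Acts s" "a \<noteq> bs s" for s a
  proof -
    have "- (p s a * Adv s a) = 0" using that \<open>\<And>s. \<forall>a\<in>Acts s. - (p s a * Adv s a) = 0\<close> by blast
    then show ?thesis using Adv_neg[OF that] by simp
  qed
  define m where "m s = (\<Sum>a\<in>Acts s. p s a)" for s
  have m_eq: "(\<Sum>a\<in>Acts s. p s a * F a) = p s (bs s) * F (bs s)" for s and F :: "'a \<Rightarrow> real"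
    using bs pzero by (subst sum_single_pt[where x="bs s"]) (auto simp: valid_policy_def)
  have m_eq1: "m s = p s (bs s)" for s using m_eq[of s "\<lambda>_. 1"] by (simp add: m_def)
  have m_eqP: "(\<Sum>a\<in>Acts s. p s a * P s a s') = m s * Q s s'" for s s'
    unfolding m_eq1 Q_def chain_of_def by (rule m_eq)
  have "is_stationary Q m"
    unfolding is_stationary_def
  proof (intro conjI allI)
    show "0 \<le> m s" for s using pnn bs by (simp add: m_eq1 valid_policy_def)
    show "sum m UNIV = 1" using p1 by (simp add: m_def)
    fix s'
    have "m s' = (\<Sum>s\<in>UNIV. \<Sum>a\<in>Acts s. p s a * P s a s')" using flow m_def by simp
    also have "\<dots> = (\<Sum>s\<in>UNIV. m s * Q s s')" by (simp only: m_eqP)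
    finally show "m s' = (\<Sum>s\<in>UNIV. m s * Q s s')" .
  qed
  then have "m = \<pi>"
    using stat_unique[OF chain_nn chain_rs[OF bs] irr[rule_format, OF bs]] stat
    unfolding Q_def by blast
  show "b = bs"
  proof
    fix s
    show "b s = bs s"
    proof (rule ccontr)
      assume ne: "b s \<noteq> bs s"
      have "p s (bs s) \<le> p s (b s)" using bp bs by (auto simp: valid_policy_def)
      also have "p s (b s) = 0" using pzero bp ne by blast
      finally have "m s \<le> 0" by (simp add: m_eq1)
      moreover have "\<pi> s > 0" unfolding \<pi>_def by (rule stat_dist_pos[OF bs])
      ultimately show False using \<open>m = \<pi>\<close> by simp
    qed
  qed
qed

end


lemma hoeff:
  fixes M :: "'w measure" and N :: "'x measure" and X :: "nat \<Rightarrow> 'w \<Rightarrow> 'x"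
    and g :: "'x \<Rightarrow> real" and B0 \<epsilon> :: real
  assumes M: "prob_space M"
    and X_meas: "\<forall>t. X t \<in> measurable M N"
    and X_indep: "prob_space.indep_vars M (\<lambda>_. N) X UNIV"
    and X_ident: "\<forall>t. distr M N (X t) = distr M N (X 0)"
    and X_supp: "\<forall>t. AE \<omega> in M. X t \<omega> \<in> Xs"
    and gm: "g \<in> borel_measurable N"
    and bnd: "\<forall>x\<in>Xs. \<forall>y\<in>Xs. g x - g y \<le> B0"
    and B0: "B0 > 0" and n: "n \<ge> 1" and eps: "\<epsilon> \<ge> 0"
  shows "measure M {\<omega>\<in>space M. (\<Sum>k<n. g (X k \<omega>)) / real n \<ge> (\<integral>\<omega>. g (X 0 \<omega>) \<partial>M) + \<epsilon>}
           \<le> exp (-2 * real n * \<epsilon>\<^sup>2 / B0\<^sup>2)"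
    and "measure M {\<omega>\<in>space M. (\<Sum>k<n. g (X k \<omega>)) / real n \<le> (\<integral>\<omega>. g (X 0 \<omega>) \<partial>M) - \<epsilon>}
           \<le> exp (-2 * real n * \<epsilon>\<^sup>2 / B0\<^sup>2)"
proof -
  interpret prob_space M by (rule M)
  have "Xs \<noteq> {}"
  proof
    assume "Xs = {}"
    then have "AE \<omega> in M. False" using X_supp by simp
    then show False by simp
  qed
  then obtain x0 where x0: "x0 \<in> Xs" by blast
  define lo where "lo = Inf (g ` Xs)"
  have bdd: "bdd_below (g ` Xs)"
    using bnd x0 by (intro bdd_belowI[of _ "g x0 - B0"]) force
  have rng: "g x \<in> {lo..lo + B0}" if "x \<in> Xs" for x
  proof -
    have "lo \<le> g x" unfolding lo_def using bdd that by (intro cInf_lower) auto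
    moreover have "g x - B0 \<le> lo" unfolding lo_def using bnd that x0
      by (intro cInf_greatest) force+
    ultimately show ?thesis by simp
  qed
  have Xm[measurable]: "X t \<in> measurable M N" for t using X_meas by blast
  note gm[measurable]
  interpret H: Hoeffding_ineq_iid M "{..<n}" "\<lambda>k \<omega>. g (X k \<omega>)" "\<lambda>\<omega>. g (X 0 \<omega>)" lo "lo + B0"
    "\<integral>\<omega>. g (X 0 \<omega>) \<partial>M"
  proof unfold_locales
    show "finite {..<n}" by simp
    show "indep_vars (\<lambda>_. borel) (\<lambda>k \<omega>. g (X k \<omega>)) {..<n}"
      by (rule indep_vars_compose2[OF indep_vars_subset[OF X_indep]]) auto
    show "distr M borel (\<lambda>\<omega>. g (X i \<omega>)) = distr M borel (\<lambda>\<omega>. g (X 0 \<omega>))" for i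
    proof -
      have "distr M borel (\<lambda>\<omega>. g (X i \<omega>)) = distr (distr M N (X i)) borel g"
        by (subst distr_distr) (auto simp: comp_def)
      also have "\<dots> = distr (distr M N (X 0)) borel g" by (simp only: X_ident[rule_format, of i])
      also have "\<dots> = distr M borel (\<lambda>\<omega>. g (X 0 \<omega>))"
        by (subst distr_distr) (auto simp: comp_def)
      finally show ?thesis .
    qed
    show "random_variable borel (\<lambda>\<omega>. g (X 0 \<omega>))" by measurable
    show "AE \<omega> in M. g (X 0 \<omega>) \<in> {lo..lo + B0}"
      using X_supp[rule_format, of 0] by eventually_elim (use rng in auto)
  qed simp
  have ne: "{..<n} \<noteq> {}" using n by (auto simp: lessThan_empty_iff)
  have lt: "lo < lo + B0" using B0 by simp
  show "measure M {\<omega>\<in>space M. (\<Sum>k<n. g (X k \<omega>)) / real n \<ge> (\<integral>\<omega>. g (X 0 \<omega>) \<partial>M) + \<epsilon>}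
           \<le> exp (-2 * real n * \<epsilon>\<^sup>2 / B0\<^sup>2)"
    using H.Hoeffding_ineq_ge'[OF eps lt ne] by simp
  show "measure M {\<omega>\<in>space M. (\<Sum>k<n. g (X k \<omega>)) / real n \<le> (\<integral>\<omega>. g (X 0 \<omega>) \<partial>M) - \<epsilon>}
           \<le> exp (-2 * real n * \<epsilon>\<^sup>2 / B0\<^sup>2)"
    using H.Hoeffding_ineq_le'[OF eps lt ne] by simp
qed



lemma geom_bound:
  fixes K c :: real
  assumes K: "K \<ge> 0" and c: "c > 0"
  shows "(\<lambda>t. K * exp (- (real (Suc t) * c))) sums (K / (exp c - 1))"
proof -
  have x: "norm (exp (-c)) < 1" using c by simp
  have s1: "(\<lambda>t. (K * exp (-c)) * exp (-c) ^ t) sums ((K * exp (-c)) * (1 / (1 - exp (-c))))"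
    by (rule sums_mult[OF geometric_sums[OF x]])
  have eqt: "K * exp (- (real (Suc t) * c)) = (K * exp (-c)) * exp (-c) ^ t" for t
  proof -
    have e1: "exp (- (real (Suc t) * c)) = exp (-c) * exp (real t * (-c))"
      by (simp add: exp_add[symmetric] algebra_simps)
    have e2: "exp (real t * (-c)) = exp (-c) ^ t" by (rule exp_of_nat_mult)
    show ?thesis by (simp only: e1 e2 mult.assoc)
  qed
  have eqv: "(K * exp (-c)) * (1 / (1 - exp (-c))) = K / (exp c - 1)"
  proof -
    have e: "exp c > 1" using c by simp
    have "exp (-c) = 1 / exp c" by (simp add: exp_minus field_simps)
    then show ?thesis using e by (simp add: field_simps)
  qed
  have fe: "(\<lambda>t. K * exp (- (real (Suc t) * c))) = (\<lambda>t. (K * exp (-c)) * exp (-c) ^ t)"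
    by (rule ext) (rule eqt)
  show ?thesis unfolding fe eqv[symmetric] by (rule s1)
qed

theorem theorem1:
  fixes Acts :: "'s::finite \<Rightarrow> 'a::finite set"
    and P :: "'s \<Rightarrow> 'a \<Rightarrow> 's \<Rightarrow> real"
    and M :: "'w measure" and N :: "'x measure"
    and X :: "nat \<Rightarrow> 'w \<Rightarrow> 'x" and Xs :: "'x set"
    and f :: "'s \<Rightarrow> 'a \<Rightarrow> 'x \<Rightarrow> real" and B :: "'s \<Rightarrow> 'a \<Rightarrow> real"
    and beta :: "nat \<Rightarrow> 'w \<Rightarrow> 's \<Rightarrow> 'a" and bstar :: "'s \<Rightarrow> 'a"
  defines "Mu \<equiv> (\<lambda>s a. \<integral>\<omega>. f s a (X 0 \<omega>) \<partial>M)"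
    and "B0 \<equiv> Max {B s a | s a. a \<in> Acts s}"
    and "Delta1 \<equiv> rho P bstar (\<lambda>s a. \<integral>\<omega>. f s a (X 0 \<omega>) \<partial>M)
              - Max {rho P \<beta> (\<lambda>s a. \<integral>\<omega>. f s a (X 0 \<omega>) \<partial>M) | \<beta>. valid_policy Acts \<beta> \<and> \<beta> \<noteq> bstar}"
  assumes M: "prob_space M"
    and Acts_ne: "\<forall>s. Acts s \<noteq> {}"
    and P_nonneg: "\<forall>s a s'. P s a s' \<ge> 0"
    and P_sum: "\<forall>s. \<forall>a\<in>Acts s. (\<Sum>s'\<in>UNIV. P s a s') = 1"
    and ergodic: "\<forall>\<beta>. valid_policy Acts \<beta> \<longrightarrow>
                    irreducible_chain (chain_of P \<beta>) \<and> aperiodic_chain (chain_of P \<beta>)"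
    and X_meas: "\<forall>t. X t \<in> measurable M N"
    and X_indep: "prob_space.indep_vars M (\<lambda>_. N) X UNIV"
    and X_ident: "\<forall>t. distr M N (X t) = distr M N (X 0)"
    and X_supp: "\<forall>t. AE \<omega> in M. X t \<omega> \<in> Xs"
    and f_meas: "\<forall>s a. f s a \<in> borel_measurable N"
    and B_bound: "\<forall>s. \<forall>a\<in>Acts s. \<forall>x\<in>Xs. \<forall>y\<in>Xs. f s a x - f s a y \<le> B s a"
    and B0_pos: "B0 > 0"
    and bstar_valid: "valid_policy Acts bstar"
    and bstar_opt: "\<forall>\<beta>. valid_policy Acts \<beta> \<longrightarrow> rho P \<beta> Mu \<le> rho P bstar Mu"
    and other_policy: "\<exists>\<beta>. valid_policy Acts \<beta> \<and> \<beta> \<noteq> bstar"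
    and LPSM: "\<forall>n\<ge>1. \<forall>\<omega>\<in>space M. LPSM_policy Acts P (Theta_emp f X n \<omega>) (beta n \<omega>)"
    and beta_meas: "\<forall>n. {\<omega>\<in>space M. beta n \<omega> \<noteq> bstar} \<in> sets M"
  shows "(\<integral>\<^sup>+\<omega>. (1 + (\<Sum>t. indicator {\<omega>\<in>space M. beta (Suc t) \<omega> \<noteq> bstar} \<omega>)) \<partial>M)
         \<le> 1 + ennreal (real ((1 + CARD('a)) * CARD('s)))
               / ennreal (exp ((Delta1 / B0)\<^sup>2 / 2) - 1)"
proof -
  interpret prob_space M by (rule M)
  have irr: "\<forall>\<beta>. valid_policy Acts \<beta> \<longrightarrow> irreducible_chain (chain_of P \<beta>)" using ergodic by blast
  define Others where "Others = {rho P \<beta> Mu | \<beta>. valid_policy Acts \<beta> \<and> \<beta> \<noteq> bstar}"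
  have D1: "Delta1 = rho P bstar Mu - Max Others" unfolding Delta1_def Others_def Mu_def ..
  have finO: "finite Others"
  proof (rule finite_subset)
    show "Others \<subseteq> range (\<lambda>\<beta>. rho P \<beta> Mu)" unfolding Others_def by blast
  qed simp
  have neO: "Others \<noteq> {}" using other_policy unfolding Others_def by blast
  have others_le: "rho P \<beta> Mu \<le> rho P bstar Mu - Delta1" if "valid_policy Acts \<beta>" "\<beta> \<noteq> bstar" for \<beta>
  proof -
    have "rho P \<beta> Mu \<le> Max Others" using finO that by (intro Max_ge) (auto simp: Others_def)
    then show ?thesis using D1 by simp
  qed
  have D_nonneg: "Delta1 \<ge> 0"
  proof -
    have "Max Others \<in> Others" using finO neO by (rule Max_in)
    then show ?thesis using D1 bstar_opt unfolding Others_def by auto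
  qed
  define K where "K = real ((1 + CARD('a)) * CARD('s))"
  have Kpos: "K > 0" unfolding K_def of_nat_0_less_iff by simp
  show ?thesis
  proof (cases "Delta1 = 0")
    case True
    have "ennreal K / ennreal (exp ((Delta1 / B0)\<^sup>2 / 2) - 1) = \<top>"
      using True Kpos by (simp add: ennreal_divide_zero)
    then show ?thesis unfolding K_def by simp
  next
    case False
    then have Dpos: "Delta1 > 0" using D_nonneg by simp
    define \<epsilon> where "\<epsilon> = Delta1 / 2"
    define c where "c = (Delta1 / B0)\<^sup>2 / 2"
    have cpos: "c > 0" using Dpos B0_pos unfolding c_def by simp
    have epos: "\<epsilon> \<ge> 0" using Dpos unfolding \<epsilon>_def by simp
    have finB: "finite {B s a | s a. a \<in> Acts s}"
      by (rule finite_subset[of _ "range (\<lambda>(s, a). B s a)"]) auto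
    have BleB0: "B s a \<le> B0" if "a \<in> Acts s" for s a
      unfolding B0_def using finB that by (intro Max_ge) auto
    have fbnd: "\<forall>x\<in>Xs. \<forall>y\<in>Xs. f s a x - f s a y \<le> B0" if "a \<in> Acts s" for s a
      using B_bound that BleB0[OF that] by force
    note Xm[measurable] = X_meas[rule_format]
    have fm[measurable]: "f s a \<in> borel_measurable N" for s a using f_meas by blast
    have Thm[measurable]: "(\<lambda>\<omega>. Theta_emp f X n \<omega> s a) \<in> borel_measurable M" for n s a
      unfolding Theta_emp_def by measurable
    have expeq: "exp (-2 * real n * \<epsilon>\<^sup>2 / B0\<^sup>2) = exp (- (real n * c))" for n
    proof -
      have "-2 * real n * \<epsilon>\<^sup>2 / B0\<^sup>2 = - (real n * c)"
        using B0_pos unfolding \<epsilon>_def c_def by (simp add: field_simps power2_eq_square)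
      then show ?thesis by simp
    qed
    have perbound: "measure M {\<omega>\<in>space M. beta n \<omega> \<noteq> bstar} \<le> K * exp (- (real n * c))"
      if n: "n \<ge> 1" for n
    proof -
      define Th where "Th \<omega> = Theta_emp f X n \<omega>" for \<omega>
      define L where "L s = {\<omega>\<in>space M. Th \<omega> s (bstar s) \<le> Mu s (bstar s) - \<epsilon>}" for s
      define U where "U s a = {\<omega>\<in>space M. Th \<omega> s a \<ge> Mu s a + \<epsilon>}" for s a
      define e where "e = exp (- (real n * c))"
      have Lm: "L s \<in> sets M" for s unfolding L_def Th_def by measurable
      have Um: "U s a \<in> sets M" for s a unfolding U_def Th_def by measurable
      have det: "beta n \<omega> = bstar"
        if w: "\<omega> \<in> space M" and lo: "\<forall>s. Th \<omega> s (bstar s) > Mu s (bstar s) - \<epsilon>"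
          and hi: "\<forall>s. \<forall>a\<in>Acts s. Th \<omega> s a < Mu s a + \<epsilon>" for \<omega>
      proof (rule LP_unique[OF P_nonneg P_sum irr bstar_valid])
        show "LPSM_policy Acts P (Th \<omega>) (beta n \<omega>)" using LPSM n w unfolding Th_def by blast
        show "\<forall>\<beta>. valid_policy Acts \<beta> \<and> \<beta> \<noteq> bstar \<longrightarrow> rho P \<beta> (Th \<omega>) < rho P bstar (Th \<omega>)"
        proof (intro allI impI, elim conjE)
          fix \<beta> assume vb: "valid_policy Acts \<beta>" and ne: "\<beta> \<noteq> bstar"
          have sd1: "(\<Sum>s\<in>UNIV. stat_dist P \<beta> s) = 1"
            using stat_dist_stat[OF P_nonneg P_sum irr vb] unfolding is_stationary_def by blast
          have sd1': "(\<Sum>s\<in>UNIV. stat_dist P bstar s) = 1"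
            using stat_dist_stat[OF P_nonneg P_sum irr bstar_valid] unfolding is_stationary_def by blast
          have "rho P \<beta> (Th \<omega>) < (\<Sum>s\<in>UNIV. stat_dist P \<beta> s * (Mu s (\<beta> s) + \<epsilon>))"
            unfolding rho_def
          proof (rule sum_strict_mono)
            fix s :: 's
            have "\<beta> s \<in> Acts s" using vb unfolding valid_policy_def by blast
            then show "stat_dist P \<beta> s * Th \<omega> s (\<beta> s) < stat_dist P \<beta> s * (Mu s (\<beta> s) + \<epsilon>)"
              using hi stat_dist_pos[OF P_nonneg P_sum irr vb] by (intro mult_strict_left_mono) auto
          qed auto
          also have "\<dots> = rho P \<beta> Mu + \<epsilon>"
            using sd1 by (simp add: rho_def distrib_left sum.distrib sum_distrib_right[symmetric])
          also have "\<dots> \<le> rho P bstar Mu - \<epsilon>" using others_le[OF vb ne] unfolding \<epsilon>_def by simp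
          also have "\<dots> = (\<Sum>s\<in>UNIV. stat_dist P bstar s * (Mu s (bstar s) - \<epsilon>))"
            using sd1' by (simp add: rho_def right_diff_distrib sum_subtractf sum_distrib_right[symmetric])
          also have "\<dots> < rho P bstar (Th \<omega>)"
            unfolding rho_def
          proof (rule sum_strict_mono)
            fix s :: 's
            show "stat_dist P bstar s * (Mu s (bstar s) - \<epsilon>) < stat_dist P bstar s * Th \<omega> s (bstar s)"
              using lo stat_dist_pos[OF P_nonneg P_sum irr bstar_valid] by (intro mult_strict_left_mono) auto
          qed auto
          finally show "rho P \<beta> (Th \<omega>) < rho P bstar (Th \<omega>)" .
        qed
      qed
      have sub: "{\<omega>\<in>space M. beta n \<omega> \<noteq> bstar} \<subseteq> (\<Union>s\<in>UNIV. L s \<union> (\<Union>a\<in>Acts s. U s a))"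
      proof
        fix \<omega> assume "\<omega> \<in> {\<omega>\<in>space M. beta n \<omega> \<noteq> bstar}"
        then have w: "\<omega> \<in> space M" and ne: "beta n \<omega> \<noteq> bstar" by auto
        show "\<omega> \<in> (\<Union>s\<in>UNIV. L s \<union> (\<Union>a\<in>Acts s. U s a))"
        proof (rule ccontr)
          assume nin: "\<omega> \<notin> (\<Union>s\<in>UNIV. L s \<union> (\<Union>a\<in>Acts s. U s a))"
          have "\<forall>s. Th \<omega> s (bstar s) > Mu s (bstar s) - \<epsilon>"
            using nin w unfolding L_def by (auto simp: not_le)
          moreover have "\<forall>s. \<forall>a\<in>Acts s. Th \<omega> s a < Mu s a + \<epsilon>"
            using nin w unfolding U_def by (auto simp: not_le)
          ultimately have "beta n \<omega> = bstar" using det w by blast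
          then show False using ne by simp
        qed
      qed
      have Lb: "measure M (L s) \<le> e" for s
      proof -
        have "bstar s \<in> Acts s" using bstar_valid unfolding valid_policy_def by blast
        from hoeff(2)[OF M X_meas X_indep X_ident X_supp fm fbnd[OF this] B0_pos n epos]
        show ?thesis unfolding L_def Th_def Theta_emp_def Mu_def e_def expeq .
      qed
      have Ub: "measure M (U s a) \<le> e" if "a \<in> Acts s" for s a
        using hoeff(1)[OF M X_meas X_indep X_ident X_supp fm fbnd[OF that] B0_pos n epos]
        unfolding U_def Th_def Theta_emp_def Mu_def e_def expeq .
      have "measure M {\<omega>\<in>space M. beta n \<omega> \<noteq> bstar} \<le> measure M (\<Union>s\<in>UNIV. L s \<union> (\<Union>a\<in>Acts s. U s a))"
        using sub Lm Um by (intro finite_measure_mono) auto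
      also have "\<dots> \<le> (\<Sum>s\<in>UNIV. measure M (L s \<union> (\<Union>a\<in>Acts s. U s a)))"
        using Lm Um by (intro measure_UNION_le) auto
      also have "\<dots> \<le> (\<Sum>s::'s\<in>UNIV. (1 + real CARD('a)) * e)"
      proof (rule sum_mono)
        fix s :: 's
        have "measure M (L s \<union> (\<Union>a\<in>Acts s. U s a)) \<le> measure M (L s) + measure M (\<Union>a\<in>Acts s. U s a)"
          using Lm Um by (intro measure_Un_le) auto
        also have "\<dots> \<le> e + (\<Sum>a\<in>Acts s. measure M (U s a))"
          using Lb[of s] measure_UNION_le[of "Acts s" "U s" M] Um by force
        also have "\<dots> \<le> e + (\<Sum>a\<in>Acts s. e)"
          using Ub by (intro add_left_mono sum_mono) auto
        also have "\<dots> = e + real (card (Acts s)) * e" by simp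
        also have "\<dots> \<le> (1 + real CARD('a)) * e"
        proof -
          have "card (Acts s) \<le> CARD('a)" by (rule card_mono) auto
          moreover have "e \<ge> 0" unfolding e_def by simp
          ultimately show ?thesis by (simp add: distrib_right mult_right_mono)
        qed
        finally show "measure M (L s \<union> (\<Union>a\<in>Acts s. U s a)) \<le> (1 + real CARD('a)) * e" .
      qed
      also have "\<dots> = K * e" unfolding K_def by (simp add: algebra_simps)
      finally show ?thesis unfolding e_def .
    qed
    define E where "E t = {\<omega>\<in>space M. beta (Suc t) \<omega> \<noteq> bstar}" for t
    have Em[measurable]: "E t \<in> sets M" for t unfolding E_def using beta_meas by blast
    have "(\<integral>\<^sup>+\<omega>. (1 + (\<Sum>t. indicator (E t) \<omega>)) \<partial>M)
        = (\<integral>\<^sup>+\<omega>. 1 \<partial>M) + (\<integral>\<^sup>+\<omega>. (\<Sum>t. indicator (E t) \<omega>) \<partial>M)"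
      by (rule nn_integral_add) auto
    also have "(\<integral>\<^sup>+\<omega>. 1 \<partial>M) = 1" by (simp add: emeasure_space_1)
    also have "(\<integral>\<^sup>+\<omega>. (\<Sum>t. indicator (E t) \<omega>) \<partial>M) = (\<Sum>t. emeasure M (E t))"
      by (subst nn_integral_suminf) auto
    also have "(\<Sum>t. emeasure M (E t)) \<le> (\<Sum>t. ennreal (K * exp (- (real (Suc t) * c))))"
    proof (intro suminf_le summableI)
      fix t
      have "emeasure M (E t) = ennreal (measure M (E t))" by (simp add: emeasure_eq_measure)
      also have "\<dots> \<le> ennreal (K * exp (- (real (Suc t) * c)))"
        using perbound[of "Suc t"] unfolding E_def by (intro ennreal_leI) auto
      finally show "emeasure M (E t) \<le> ennreal (K * exp (- (real (Suc t) * c)))" .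
    qed
    also have "(\<Sum>t. ennreal (K * exp (- (real (Suc t) * c)))) = ennreal (K / (exp c - 1))"
    proof -
      have s: "(\<lambda>t. K * exp (- (real (Suc t) * c))) sums (K / (exp c - 1))"
        by (rule geom_bound) (use Kpos cpos in auto)
      have "(\<Sum>t. ennreal (K * exp (- (real (Suc t) * c)))) = ennreal (\<Sum>t. K * exp (- (real (Suc t) * c)))"
        using s Kpos by (intro suminf_ennreal2) (auto simp: sums_iff)
      then show ?thesis using s by (simp add: sums_iff)
    qed
    also have "ennreal (K / (exp c - 1)) = ennreal K / ennreal (exp c - 1)"
      using Kpos cpos by (intro divide_ennreal[symmetric]) auto
    finally show ?thesis unfolding E_def K_def c_def by (simp add: add_left_mono)
  qed
qed

end
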